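(* Let $G=(G_1,\dots,G_N)$ be a finite normal-form game with strategy sets $\mathcal{A}_q$, fix a player $p$, a scalar $s_p>0$ and an arbitrary function $b_p:\mathcal{A}_{-p}\to\mathbb{R}$, and let $\hat G$ be the game with $\hat G_p(a)=s_pG_p(a)+b_p(a_{-p})$ and $\hat G_q=G_q$ for $q\ne p$. Suppose $G$ and $\hat G$ each have a unique maximum-entropy Nash equilibrium. Then the Nash-average ratings $r^{\mathrm{NA}}_p$ of $G$ and $\hat r^{\mathrm{NA}}_p$ of $\hat G$ induce the same ranking of player $p$'s strategies: for all $a_p,\tilde a_p\in\mathcal{A}_p$, $r^{\mathrm{NA}}_p(a_p)<r^{\mathrm{NA}}_p(\tilde a_p)$ iff $\hat r^{\mathrm{NA}}_p(a_p)<\hat r^{\mathrm{NA}}_p(\tilde a_p)$, and $r^{\mathrm{NA}}_p(a_p)=r^{\mathrm{NA}}_p(\tilde a_p)$ iff $\hat r^{\mathrm{NA}}_p(a_p)=\hat r^{\mathrm{NA}}_p(\tilde a_p)$.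
   Context: A Nash equilibrium is a profile of mixed strategies $(\sigma_1,\dots,\sigma_N)$ such that no player can increase its expected payoff by unilaterally deviating; the maximum-entropy Nash equilibrium $\sigma^{\mathrm{MENE}}$ is a Nash equilibrium maximizing the Shannon entropy of the product distribution $\otimes_q\sigma_q$. The Nash-average rating of player $p$'s strategy $a_p$ in game $G$ is $r^{\mathrm{NA}}_p(a_p)=\sum_{a_{-p}\in\mathcal{A}_{-p}}G_p(a_p,a_{-p})\prod_{q\ne p}\sigma^{\mathrm{MENE}}_q(a_q)$, computed with the maximum-entropy Nash equilibrium of that game. *)

theory Defs
  imports Complex_Main "HOL-Library.FuncSet"
begin

(* A finite normal-form game: players form the finite type 'p, player q has a
   finite nonempty strategy set A q, pure profiles are the extensional functions
   in PiE UNIV A, and G q a is player q's payoff at profile a. *)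

type_synonym ('p,'a) game = "'p \<Rightarrow> ('p \<Rightarrow> 'a) \<Rightarrow> real"
type_synonym ('p,'a) mixed_profile = "'p \<Rightarrow> 'a \<Rightarrow> real"

definition profiles :: "('p \<Rightarrow> 'a set) \<Rightarrow> ('p \<Rightarrow> 'a) set" where
  "profiles A = PiE UNIV A"

definition mixed_strategy :: "'a set \<Rightarrow> ('a \<Rightarrow> real) \<Rightarrow> bool" where
  "mixed_strategy S \<tau> \<longleftrightarrow> (\<forall>x\<in>S. 0 \<le> \<tau> x) \<and> (\<forall>x. x \<notin> S \<longrightarrow> \<tau> x = 0) \<and> (\<Sum>x\<in>S. \<tau> x) = 1"

definition mixed_profile :: "('p \<Rightarrow> 'a set) \<Rightarrow> ('p,'a) mixed_profile \<Rightarrow> bool" where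
  "mixed_profile A \<sigma> \<longleftrightarrow> (\<forall>q. mixed_strategy (A q) (\<sigma> q))"

definition prod_prob :: "('p::finite,'a) mixed_profile \<Rightarrow> ('p \<Rightarrow> 'a) \<Rightarrow> real" where
  "prod_prob \<sigma> a = (\<Prod>q\<in>UNIV. \<sigma> q (a q))"

definition exp_payoff :: "('p \<Rightarrow> 'a set) \<Rightarrow> ('p::finite,'a) game \<Rightarrow> ('p,'a) mixed_profile \<Rightarrow> 'p \<Rightarrow> real" where
  "exp_payoff A G \<sigma> p = (\<Sum>a\<in>profiles A. G p a * prod_prob \<sigma> a)"

definition nash_eq :: "('p \<Rightarrow> 'a set) \<Rightarrow> ('p::finite,'a) game \<Rightarrow> ('p,'a) mixed_profile \<Rightarrow> bool" where
  "nash_eq A G \<sigma> \<longleftrightarrow> mixed_profile A \<sigma> \<and>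
     (\<forall>p \<tau>. mixed_strategy (A p) \<tau> \<longrightarrow> exp_payoff A G (\<sigma>(p := \<tau>)) p \<le> exp_payoff A G \<sigma> p)"

definition prod_entropy :: "('p \<Rightarrow> 'a set) \<Rightarrow> ('p::finite,'a) mixed_profile \<Rightarrow> real" where
  "prod_entropy A \<sigma> = - (\<Sum>a\<in>profiles A. (let P = prod_prob \<sigma> a in if P = 0 then 0 else P * ln P))"

definition is_MENE :: "('p \<Rightarrow> 'a set) \<Rightarrow> ('p::finite,'a) game \<Rightarrow> ('p,'a) mixed_profile \<Rightarrow> bool" where
  "is_MENE A G \<sigma> \<longleftrightarrow> nash_eq A G \<sigma> \<and> (\<forall>\<tau>. nash_eq A G \<tau> \<longrightarrow> prod_entropy A \<tau> \<le> prod_entropy A \<sigma>)"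

definition MENE :: "('p \<Rightarrow> 'a set) \<Rightarrow> ('p::finite,'a) game \<Rightarrow> ('p,'a) mixed_profile" where
  "MENE A G = (THE \<sigma>. is_MENE A G \<sigma>)"

(* Nash-average rating: sum over opponents' profiles a_{-p} (extensional on UNIV - {p}) *)
definition NA_rating :: "('p \<Rightarrow> 'a set) \<Rightarrow> ('p::finite,'a) game \<Rightarrow> 'p \<Rightarrow> 'a \<Rightarrow> real" where
  "NA_rating A G p ap = (\<Sum>a\<in>PiE (UNIV - {p}) A.
      G p (a(p := ap)) * (\<Prod>q\<in>UNIV - {p}. MENE A G q (a q)))"

(* the transformed game: \<hat>G_p(a) = s * G_p(a) + b(a_{-p}), \<hat>G_q = G_q otherwise;
   b sees only a_{-p} since the p-th coordinate is overwritten *)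
definition affine_transform :: "('p,'a) game \<Rightarrow> 'p \<Rightarrow> real \<Rightarrow> (('p \<Rightarrow> 'a) \<Rightarrow> real) \<Rightarrow> ('p,'a) game" where
  "affine_transform G p s b = (\<lambda>q a. if q = p then s * G p a + b (a(p := undefined)) else G q a)"

end

theory Submission
  imports Defs
begin

lemma sum_profiles_split:
  assumes "\<forall>q. finite (A q)"
  shows "(\<Sum>a\<in>PiE UNIV A. F a) = (\<Sum>x\<in>A p. \<Sum>g\<in>PiE (UNIV-{p}) A. F (g(p:=x)))"
proof -
  have U: "insert p (UNIV - {p}) = UNIV" by auto
  have E: "PiE UNIV A = (\<lambda>(y,g). g(p:=y)) ` (A p \<times> PiE (UNIV-{p}) A)"
    using PiE_insert_eq[of p "UNIV-{p}" A] U by metis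
  have I: "inj_on (\<lambda>(y,g). g(p:=y)) (A p \<times> PiE (UNIV-{p}) A)"
    by (rule inj_combinator) simp
  have "(\<Sum>a\<in>PiE UNIV A. F a) = (\<Sum>z\<in>A p \<times> PiE (UNIV-{p}) A. F ((\<lambda>(y,g). g(p:=y)) z))"
    unfolding E by (rule sum.reindex[OF I, unfolded comp_def])
  also have "\<dots> = (\<Sum>x\<in>A p. \<Sum>g\<in>PiE (UNIV-{p}) A. F (g(p:=x)))"
    by (subst sum.cartesian_product) (simp add: split_def)
  finally show ?thesis .
qed

lemma prod_prob_split:
  fixes \<sigma> :: "('p::finite,'a) mixed_profile"
  shows "prod_prob \<sigma> (g(p:=x)) = \<sigma> p x * (\<Prod>q\<in>UNIV-{p}. \<sigma> q (g q))"
proof -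
  have "prod_prob \<sigma> (g(p:=x)) = \<sigma> p x * (\<Prod>q\<in>UNIV-{p}. \<sigma> q ((g(p:=x)) q))"
    unfolding prod_prob_def by (subst prod.remove[of UNIV p]) auto
  also have "(\<Prod>q\<in>UNIV-{p}. \<sigma> q ((g(p:=x)) q)) = (\<Prod>q\<in>UNIV-{p}. \<sigma> q (g q))"
    by (rule prod.cong) auto
  finally show ?thesis .
qed

lemma exp_payoff_split:
  fixes \<sigma> :: "('p::finite,'a) mixed_profile"
  assumes "\<forall>q. finite (A q)"
  shows "exp_payoff A H \<sigma> r = (\<Sum>x\<in>A p. \<sigma> p x * (\<Sum>g\<in>PiE (UNIV-{p}) A.
            H r (g(p:=x)) * (\<Prod>q\<in>UNIV-{p}. \<sigma> q (g q))))"
  unfolding exp_payoff_def profiles_def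
  by (subst sum_profiles_split[OF assms, of _ p]) (simp add: prod_prob_split sum_distrib_left algebra_simps)

lemma upd_undef:
  assumes "g \<in> PiE (UNIV-{p}) A"
  shows "(g(p:=x))(p:=undefined) = g"
  using assms by (auto simp: PiE_def extensional_def)

lemma upd_undef2:
  assumes "g \<in> PiE (UNIV-{p}) A"
  shows "g(p:=undefined) = g"
  using assms by (auto simp: PiE_def extensional_def)

lemma exp_payoff_aff:
  fixes \<sigma> :: "('p::finite,'a) mixed_profile"
  assumes "\<forall>q. finite (A q)" and "mixed_strategy (A p) (\<sigma> p)"
  shows "exp_payoff A (affine_transform G p s b) \<sigma> p =
     s * exp_payoff A G \<sigma> p + (\<Sum>g\<in>PiE (UNIV-{p}) A. b g * (\<Prod>q\<in>UNIV-{p}. \<sigma> q (g q)))"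
proof -
  let ?K = "\<lambda>g. (\<Prod>q\<in>UNIV-{p}. \<sigma> q (g q))"
  let ?B = "(\<Sum>g\<in>PiE (UNIV-{p}) A. b g * ?K g)"
  have "exp_payoff A (affine_transform G p s b) \<sigma> p =
     (\<Sum>x\<in>A p. \<sigma> p x * (\<Sum>g\<in>PiE (UNIV-{p}) A. (s * G p (g(p:=x)) + b g) * ?K g))"
    unfolding exp_payoff_split[OF assms(1), of _ _ _ p]
    by (intro sum.cong refl arg_cong2[where f="(*)"]) (simp add: affine_transform_def upd_undef2)
  also have "\<dots> = (\<Sum>x\<in>A p. s * (\<sigma> p x * (\<Sum>g\<in>PiE (UNIV-{p}) A. G p (g(p:=x)) * ?K g)) + \<sigma> p x * ?B)"
    by (intro sum.cong refl) (simp add: distrib_right sum.distrib sum_distrib_left algebra_simps)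
  also have "\<dots> = s * exp_payoff A G \<sigma> p + (\<Sum>x\<in>A p. \<sigma> p x) * ?B"
    unfolding exp_payoff_split[OF assms(1), of _ _ _ p]
    by (simp add: sum.distrib sum_distrib_left sum_distrib_right sum.swap[of _ "A p"])
  also have "(\<Sum>x\<in>A p. \<sigma> p x) = 1" using assms(2) by (simp add: mixed_strategy_def)
  finally show ?thesis by simp
qed

lemma nash_iff:
  fixes A :: "'p::finite \<Rightarrow> 'a set"
  assumes "\<forall>q. finite (A q)" and "s > 0"
  shows "nash_eq A (affine_transform G p s b) \<sigma> = nash_eq A G \<sigma>"
proof -
  have other: "exp_payoff A (affine_transform G p s b) \<tau> q = exp_payoff A G \<tau> q" if "q \<noteq> p" for \<tau> q
    using that by (simp add: exp_payoff_def affine_transform_def)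
  have main: "(exp_payoff A (affine_transform G p s b) (\<sigma>(p:=\<tau>)) p \<le> exp_payoff A (affine_transform G p s b) \<sigma> p)
     = (exp_payoff A G (\<sigma>(p:=\<tau>)) p \<le> exp_payoff A G \<sigma> p)"
    if "mixed_profile A \<sigma>" "mixed_strategy (A p) \<tau>" for \<tau>
  proof -
    have m: "mixed_strategy (A p) (\<sigma> p)" using that(1) by (simp add: mixed_profile_def)
    have K: "(\<Prod>q\<in>UNIV-{p}. (\<sigma>(p:=\<tau>)) q (g q)) = (\<Prod>q\<in>UNIV-{p}. \<sigma> q (g q))" for g
      by (rule prod.cong) auto
    show ?thesis
      using exp_payoff_aff[where A=A and p=p and \<sigma>=\<sigma> and G=G and s=s and b=b, OF assms(1) m]
        exp_payoff_aff[where A=A and p=p and \<sigma>="\<sigma>(p:=\<tau>)" and G=G and s=s and b=b, OF assms(1)]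
        that(2) assms(2) K by simp
  qed
  show ?thesis
    unfolding nash_eq_def
    using main other by (metis order_refl)
qed

theorem mainTheorem8:
  fixes A :: "'p::finite \<Rightarrow> 'a set" and G :: "('p,'a) game"
    and p :: 'p and s :: real and b :: "('p \<Rightarrow> 'a) \<Rightarrow> real"
  assumes "\<forall>q. finite (A q) \<and> A q \<noteq> {}"
    and "s > 0"
    and "\<exists>!\<sigma>. is_MENE A G \<sigma>"
    and "\<exists>!\<sigma>. is_MENE A (affine_transform G p s b) \<sigma>"
    and "ap \<in> A p" and "ap' \<in> A p"
  shows "(NA_rating A G p ap < NA_rating A G p ap' \<longleftrightarrow>
          NA_rating A (affine_transform G p s b) p ap < NA_rating A (affine_transform G p s b) p ap')
       \<and> (NA_rating A G p ap = NA_rating A G p ap' \<longleftrightarrow>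
          NA_rating A (affine_transform G p s b) p ap = NA_rating A (affine_transform G p s b) p ap')"
proof -
  have fin: "\<forall>q. finite (A q)" using assms(1) by simp
  have "is_MENE A (affine_transform G p s b) = is_MENE A G"
    unfolding is_MENE_def[abs_def] nash_iff[OF fin assms(2)] by simp
  hence M: "MENE A (affine_transform G p s b) = MENE A G" by (simp add: MENE_def)
  let ?M = "\<lambda>g. (\<Prod>q\<in>UNIV - {p}. MENE A G q (g q))"
  let ?C = "(\<Sum>g\<in>PiE (UNIV-{p}) A. b g * ?M g)"
  have R: "NA_rating A (affine_transform G p s b) p x = s * NA_rating A G p x + ?C" for x
  proof -
    have "NA_rating A (affine_transform G p s b) p x =
        (\<Sum>g\<in>PiE (UNIV-{p}) A. (s * G p (g(p:=x)) + b g) * ?M g)"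
      unfolding NA_rating_def M
      by (intro sum.cong refl) (simp add: affine_transform_def upd_undef2)
    also have "\<dots> = s * NA_rating A G p x + ?C"
      unfolding NA_rating_def
      by (simp add: distrib_right sum.distrib sum_distrib_left mult.assoc)
    finally show ?thesis .
  qed
  show ?thesis unfolding R using assms(2) by simp
qed

end
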